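(* If $G$ is a minimally $1/2$-tough claw-free graph, then every cycle of $G$ has length $3$.
   Context: All graphs are finite, simple and undirected. A graph is claw-free if it contains no induced subgraph isomorphic to $K_{1,3}$. $\omega(H)$ denotes the number of components of $H$. A cutset of $G$ is a vertex set $S$ with $G-S$ disconnected. For positive real $t$, $G$ is $t$-tough if $\omega(G-S)\le |S|/t$ for every cutset $S$; the toughness $\tau(G)$ is the largest such $t$, with $\tau(K_n)=\infty$ for all $n\ge1$. $G$ is minimally $t$-tough if $\tau(G)=t$ and $\tau(G-e)<t$ for every edge $e$ of $G$. *)

theory Defs
  imports Complex_Main "HOL-Library.Extended_Real"
begin

definition simple_graph :: "'a set \<Rightarrow> 'a set set \<Rightarrow> bool" where
  "simple_graph V E \<longleftrightarrow> finite V \<and>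
     (\<forall>e\<in>E. \<exists>u v. e = {u, v} \<and> u \<in> V \<and> v \<in> V \<and> u \<noteq> v)"

definition reach_in :: "'a set set \<Rightarrow> 'a set \<Rightarrow> 'a \<Rightarrow> 'a \<Rightarrow> bool" where
  "reach_in E W = (\<lambda>x y. x \<in> W \<and> y \<in> W \<and> {x, y} \<in> E)\<^sup>*\<^sup>*"

definition components :: "'a set set \<Rightarrow> 'a set \<Rightarrow> 'a set set" where
  "components E W = {{y. reach_in E W x y} | x. x \<in> W}"

definition num_comp :: "'a set \<Rightarrow> 'a set set \<Rightarrow> 'a set \<Rightarrow> nat" where
  "num_comp V E S = card (components E (V - S))"

definition cutset :: "'a set \<Rightarrow> 'a set set \<Rightarrow> 'a set \<Rightarrow> bool" where
  "cutset V E S \<longleftrightarrow> S \<subseteq> V \<and> num_comp V E S \<ge> 2"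

definition tough :: "'a set \<Rightarrow> 'a set set \<Rightarrow> real \<Rightarrow> bool" where
  "tough V E t \<longleftrightarrow> (\<forall>S. cutset V E S \<longrightarrow> real (num_comp V E S) \<le> real (card S) / t)"

text \<open>Toughness: the largest positive t such that G is t-tough (infinity if G is
  t-tough for all t, e.g. complete graphs; 0 if G is t-tough for no positive t).\<close>
definition toughness :: "'a set \<Rightarrow> 'a set set \<Rightarrow> ereal" where
  "toughness V E = Sup ({0} \<union> {ereal t | t. 0 < t \<and> tough V E t})"

definition minimally_tough :: "'a set \<Rightarrow> 'a set set \<Rightarrow> real \<Rightarrow> bool" where
  "minimally_tough V E t \<longleftrightarrow> toughness V E = ereal t \<and>
     (\<forall>e\<in>E. toughness V (E - {e}) < ereal t)"

definition claw_free :: "'a set \<Rightarrow> 'a set set \<Rightarrow> bool" where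
  "claw_free V E \<longleftrightarrow> \<not> (\<exists>c a b d. c \<in> V \<and> a \<in> V \<and> b \<in> V \<and> d \<in> V \<and>
     distinct [c, a, b, d] \<and> {c, a} \<in> E \<and> {c, b} \<in> E \<and> {c, d} \<in> E \<and>
     {a, b} \<notin> E \<and> {a, d} \<notin> E \<and> {b, d} \<notin> E)"

definition is_cycle :: "'a set \<Rightarrow> 'a set set \<Rightarrow> 'a list \<Rightarrow> bool" where
  "is_cycle V E vs \<longleftrightarrow> length vs \<ge> 3 \<and> distinct vs \<and> set vs \<subseteq> V \<and>
     (\<forall>i < length vs. {vs ! i, vs ! ((i + 1) mod length vs)} \<in> E)"

end

theory Submission
  imports Defs
begin



lemma reach_sym:
  assumes "reach_in E W x y" shows "reach_in E W y x"
proof -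
  have "symp (\<lambda>x y. x \<in> W \<and> y \<in> W \<and> {x, y} \<in> E)"
    by (auto intro!: sympI simp: insert_commute)
  then show ?thesis using assms unfolding reach_in_def by (blast dest: sympD[OF symp_rtranclp])
qed

lemma reach_trans: "reach_in E W x y \<Longrightarrow> reach_in E W y z \<Longrightarrow> reach_in E W x z"
  unfolding reach_in_def by (rule rtranclp_trans)

lemma reach_refl: "reach_in E W x x"
  unfolding reach_in_def by simp

lemma reach_edge: "x \<in> W \<Longrightarrow> y \<in> W \<Longrightarrow> {x,y} \<in> E \<Longrightarrow> reach_in E W x y"
  unfolding reach_in_def by (rule r_into_rtranclp) simp

lemma reach_in_W: "reach_in E W x y \<Longrightarrow> x \<in> W \<Longrightarrow> y \<in> W"
  unfolding reach_in_def by (induction rule: rtranclp_induct) auto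

lemma reach_mono: "reach_in E W x y \<Longrightarrow> E \<subseteq> E' \<Longrightarrow> W \<subseteq> W' \<Longrightarrow> reach_in E' W' x y"
  unfolding reach_in_def
  by (erule rtranclp_mono[THEN predicate2D, rotated]) auto

lemma comp_sub: "C \<in> components E W \<Longrightarrow> C \<subseteq> W"
  unfolding components_def using reach_in_W by fastforce

lemma comp_finite: "finite W \<Longrightarrow> finite (components E W)"
proof -
  assume "finite W"
  have "components E W \<subseteq> Pow W" using comp_sub by blast
  then show ?thesis using \<open>finite W\<close> finite_subset by blast
qed

lemma comp_rep: "C \<in> components E W \<Longrightarrow> w \<in> C \<Longrightarrow> C = {y. reach_in E W w y}"
proof -
  assume C: "C \<in> components E W" and w: "w \<in> C"
  obtain x where x: "C = {y. reach_in E W x y}" using C unfolding components_def by blast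
  have xw: "reach_in E W x w" using w x by blast
  have "reach_in E W x y \<longleftrightarrow> reach_in E W w y" for y
    using reach_trans[OF xw, of y] reach_trans[OF reach_sym[OF xw], of y] by blast
  then show ?thesis using x by blast
qed

lemma comp_eq: "C \<in> components E W \<Longrightarrow> D \<in> components E W \<Longrightarrow> w \<in> C \<Longrightarrow> w \<in> D \<Longrightarrow> C = D"
proof -
  assume a: "C \<in> components E W" "D \<in> components E W" "w \<in> C" "w \<in> D"
  show "C = D" using comp_rep[OF a(1,3)] comp_rep[OF a(2,4)] by simp
qed

lemma comp_closed: "C \<in> components E W \<Longrightarrow> a \<in> C \<Longrightarrow> reach_in E W a b \<Longrightarrow> b \<in> C"
  by (drule comp_rep) auto

lemma comp_of: "w \<in> W \<Longrightarrow> {y. reach_in E W w y} \<in> components E W"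
  unfolding components_def by blast

lemma comp_self: "C \<in> components E W \<Longrightarrow> \<exists>w\<in>W. w \<in> C"
  unfolding components_def by (auto intro: reach_refl)

lemma comp_keep:
  assumes C: "C \<in> components E W" and nb: "\<not> (\<exists>y\<in>C. {s, y} \<in> E)"
  shows "C \<in> components E (insert s W)"
proof -
  obtain x where x: "x \<in> W" "C = {y. reach_in E W x y}" using C unfolding components_def by blast
  have "reach_in E W x y" if "reach_in E (insert s W) x y" for y
    using that unfolding reach_in_def
  proof (induction rule: rtranclp_induct)
    case base then show ?case by simp
  next
    case (step y z)
    have "reach_in E W x y" using step(3) unfolding reach_in_def .
    then have yW: "y \<in> W" using reach_in_W x(1) by metis
    have "y \<in> C" using x(2) \<open>reach_in E W x y\<close> by simp
    then have "z \<noteq> s" using nb step(2) by (metis insert_commute)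
    then have "z \<in> W" using step(2) by auto
    show ?case
      by (rule rtranclp.rtrancl_into_rtrancl[OF step(3)]) (use yW \<open>z \<in> W\<close> step(2) in simp)
  qed
  moreover have "reach_in E (insert s W) x y" if "reach_in E W x y" for y
    using reach_mono[OF that subset_refl subset_insertI] .
  ultimately have "C = {y. reach_in E (insert s W) x y}" using x(2) by (intro set_eqI) blast
  then show ?thesis using x(1) comp_of[of x "insert s W" E] by simp
qed



lemma add_vertex_count:
  fixes E :: "'a set set"
  assumes fin: "finite W" and s: "s \<notin> W"
  defines "N \<equiv> {C \<in> components E W. \<exists>y\<in>C. {s, y} \<in> E}"
  shows "card (components E W) + 1 \<le> card (components E (insert s W)) + card N"
proof -
  let ?Cs = "{y. reach_in E (insert s W) s y}"
  have sub1: "components E W - N \<subseteq> components E (insert s W)"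
  proof
    fix C assume "C \<in> components E W - N"
    then have "C \<in> components E W" "\<not> (\<exists>y\<in>C. {s, y} \<in> E)" unfolding N_def by auto
    then show "C \<in> components E (insert s W)" by (rule comp_keep)
  qed
  have "?Cs \<in> components E (insert s W)" by (rule comp_of) simp
  then have sub: "(components E W - N) \<union> {?Cs} \<subseteq> components E (insert s W)" using sub1 by simp
  have nin: "?Cs \<notin> components E W - N"
  proof
    assume "?Cs \<in> components E W - N"
    then have "?Cs \<subseteq> W" using comp_sub by (metis DiffD1)
    moreover have "s \<in> ?Cs" by (simp add: reach_refl)
    ultimately show False using s by blast
  qed
  have finW: "finite (components E W)" using comp_finite fin by blast
  have finW': "finite (components E (insert s W))" using comp_finite fin by blast
  have NS: "N \<subseteq> components E W" unfolding N_def by blast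
  have "card ((components E W - N) \<union> {?Cs}) = card (components E W - N) + 1"
    using nin finW by simp
  also have "card (components E W - N) = card (components E W) - card N"
    using NS finW by (simp add: card_Diff_subset finite_subset)
  finally have "card (components E W) - card N + 1 \<le> card (components E (insert s W))"
    using card_mono[OF finW' sub] by simp
  moreover have "card N \<le> card (components E W)" using NS finW card_mono by blast
  ultimately show ?thesis by linarith
qed


lemma three_elems:
  assumes "3 \<le> card A"
  obtains x y z where "x \<in> A" "y \<in> A" "z \<in> A" "x \<noteq> y" "x \<noteq> z" "y \<noteq> z"
proof -
  have "Suc 2 \<le> card A" using assms by simp
  then obtain x B where B: "A = insert x B" "x \<notin> B" "2 \<le> card B"
    using card_le_Suc_iff[THEN iffD1] by blast
  then have "Suc 1 \<le> card B" by simp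
  then obtain y D where D: "B = insert y D" "y \<notin> D" "1 \<le> card D"
    using card_le_Suc_iff[THEN iffD1] by blast
  then have "Suc 0 \<le> card D" by simp
  then obtain z F where F: "D = insert z F" "z \<notin> F"
    using card_le_Suc_iff[THEN iffD1] by blast
  show ?thesis using that[of x y z] B D F by auto
qed


lemma claw_count:
  assumes cf: "claw_free V E" and WV: "W \<subseteq> V" and sV: "s \<in> V" and s: "s \<notin> W"
  shows "card {C \<in> components E W. \<exists>y\<in>C. {s, y} \<in> E} \<le> 2"
proof (rule ccontr)
  let ?N = "{C \<in> components E W. \<exists>y\<in>C. {s, y} \<in> E}"
  assume "\<not> card ?N \<le> 2"
  then have "card ?N \<ge> 3" by simp
  then obtain C1 C2 C3 where c: "C1 \<in> ?N" "C2 \<in> ?N" "C3 \<in> ?N" "C1 \<noteq> C2" "C1 \<noteq> C3" "C2 \<noteq> C3"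
    by (rule three_elems) blast
  obtain a where a: "a \<in> C1" "{s,a} \<in> E" using c by blast
  obtain b where b: "b \<in> C2" "{s,b} \<in> E" using c by blast
  obtain d where d: "d \<in> C3" "{s,d} \<in> E" using c by blast
  have comps: "C1 \<in> components E W" "C2 \<in> components E W" "C3 \<in> components E W" using c by auto
  have W: "a \<in> W" "b \<in> W" "d \<in> W"
    using comp_sub[OF comps(1)] comp_sub[OF comps(2)] comp_sub[OF comps(3)] a(1) b(1) d(1) by auto
  have ne: "{x,y} \<notin> E" if "x \<in> C" "y \<in> D" "C \<in> components E W" "D \<in> components E W" "C \<noteq> D" for x y C D
  proof
    assume "{x,y} \<in> E"
    moreover have "x \<in> W" "y \<in> W" using comp_sub[OF that(3)] comp_sub[OF that(4)] that(1,2) by auto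
    ultimately have "reach_in E W x y" using reach_edge by metis
    then have "y \<in> C" using comp_closed[OF that(3,1)] by blast
    then show False using comp_eq[OF that(3,4) _ that(2)] that(5) by blast
  qed
  have dist: "a \<noteq> b" "a \<noteq> d" "b \<noteq> d"
    using comp_eq[OF comps(1,2) a(1)] comp_eq[OF comps(1,3) a(1)] comp_eq[OF comps(2,3) b(1)] b(1) d(1) c(4,5,6)
    by auto
  have "s \<noteq> a" "s \<noteq> b" "s \<noteq> d" using s W by auto
  then have "distinct [s, a, b, d]" using dist by simp
  moreover have "{a,b} \<notin> E" "{a,d} \<notin> E" "{b,d} \<notin> E"
    using ne[OF a(1) b(1) comps(1,2) c(4)] ne[OF a(1) d(1) comps(1,3) c(5)] ne[OF b(1) d(1) comps(2,3) c(6)] by auto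
  ultimately have "s \<in> V \<and> a \<in> V \<and> b \<in> V \<and> d \<in> V \<and> distinct [s, a, b, d] \<and> {s, a} \<in> E \<and> {s, b} \<in> E \<and> {s, d} \<in> E \<and>
     {a, b} \<notin> E \<and> {a, d} \<notin> E \<and> {b, d} \<notin> E"
    using sV W WV a(2) b(2) d(2) by auto
  then have "\<not> claw_free V E" unfolding claw_free_def
    by (simp only: not_not) (rule exI[of _ s], rule exI[of _ a], rule exI[of _ b], rule exI[of _ d])
  then show False using cf by simp
qed




lemma bypass:
  assumes byp: "\<And>x y. x \<in> W \<Longrightarrow> y \<in> W \<Longrightarrow> {x,y} = e \<Longrightarrow> reach_in (E - {e}) W x y"
  shows "reach_in E W = reach_in (E - {e}) W"
proof (intro ext iffI)
  fix a b assume "reach_in E W a b"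
  then show "reach_in (E - {e}) W a b" unfolding reach_in_def
  proof (induction rule: rtranclp_induct)
    case base then show ?case by simp
  next
    case (step y z)
    show ?case
    proof (cases "{y,z} = e")
      case True
      have "reach_in (E - {e}) W y z" using step(2) True by (intro byp) auto
      moreover have "reach_in (E - {e}) W a y" using step(3) unfolding reach_in_def .
      ultimately have "reach_in (E - {e}) W a z" using reach_trans by metis
      then show ?thesis unfolding reach_in_def .
    next
      case False
      have ed: "y \<in> W \<and> z \<in> W \<and> {y,z} \<in> E - {e}" using False step(2) by blast
      show ?thesis by (rule rtranclp.rtrancl_into_rtrancl[OF step(3)]) (insert ed, blast)
    qed
  qed
next
  fix a b assume "reach_in (E - {e}) W a b"
  then show "reach_in E W a b" by (rule reach_mono) auto
qed

lemma bypass_comp: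
  assumes byp: "\<And>x y. x \<in> W \<Longrightarrow> y \<in> W \<Longrightarrow> {x,y} = e \<Longrightarrow> reach_in (E - {e}) W x y"
  shows "components E W = components (E - {e}) W"
proof -
  have eq: "reach_in E W = reach_in (E - {e}) W" by (rule bypass) (rule byp)
  show ?thesis unfolding components_def
    by (rule arg_cong[where f="\<lambda>R. {Collect (R x) |x. x \<in> W}", OF eq])
qed

lemma split_count:
  assumes fin: "finite W" and uv: "u \<in> W" "v \<in> W" and nr: "\<not> reach_in (E - {{u,v}}) W u v"
  shows "card (components (E - {{u,v}}) W) \<le> card (components E W) + 1"
proof -
  let ?E' = "E - {{u,v}}"
  let ?Cu' = "{y. reach_in ?E' W u y}"
  let ?Cv' = "{y. reach_in ?E' W v y}"
  let ?Cu = "{y. reach_in E W u y}"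
  have sub: "components ?E' W - {?Cu', ?Cv'} \<subseteq> components E W - {?Cu}"
  proof
    fix C' assume C': "C' \<in> components ?E' W - {?Cu', ?Cv'}"
    then have C'c: "C' \<in> components ?E' W" by blast
    obtain x where x: "x \<in> W" "C' = {y. reach_in ?E' W x y}" using C'c unfolding components_def by blast
    have nu: "u \<notin> C'"
    proof
      assume "u \<in> C'" then have "C' = ?Cu'" by (rule comp_rep[OF C'c])
      then show False using C' by blast
    qed
    have nv: "v \<notin> C'"
    proof
      assume "v \<in> C'" then have "C' = ?Cv'" by (rule comp_rep[OF C'c])
      then show False using C' by blast
    qed
    have "reach_in ?E' W x y" if "reach_in E W x y" for y
      using that unfolding reach_in_def
    proof (induction rule: rtranclp_induct)
      case base then show ?case by simp
    next
      case (step y z)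
      have "y \<in> C'" using x(2) step(3) unfolding reach_in_def by simp
      then have "y \<noteq> u" "y \<noteq> v" using nu nv by auto
      then have "{y,z} \<noteq> {u,v}" by (auto simp: doubleton_eq_iff)
      then have ed: "y \<in> W \<and> z \<in> W \<and> {y,z} \<in> E - {{u,v}}" using step(2) by blast
      show ?case by (rule rtranclp.rtrancl_into_rtrancl[OF step(3)]) (insert ed, blast)
    qed
    moreover have "reach_in E W x y" if "reach_in ?E' W x y" for y
      using reach_mono[OF that, of E W] by blast
    ultimately have "C' = {y. reach_in E W x y}" using x(2) by (intro set_eqI) blast
    then have "C' \<in> components E W" using comp_of[OF x(1), of E] by simp
    moreover have "C' \<noteq> ?Cu" using nu reach_refl[of E W u] by blast
    ultimately show "C' \<in> components E W - {?Cu}" by blast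
  qed
  have finE: "finite (components E W)" using comp_finite fin by blast
  have Cu: "?Cu \<in> components E W" by (rule comp_of[OF uv(1)])
  have "card (components ?E' W) - card {?Cu', ?Cv'} \<le> card (components ?E' W - {?Cu', ?Cv'})"
    by (rule diff_card_le_card_Diff) simp
  also have "\<dots> \<le> card (components E W - {?Cu})"
    using card_mono[OF _ sub] finE by blast
  also have "\<dots> = card (components E W) - 1" by (rule card_Diff_singleton[OF Cu])
  finally have "card (components ?E' W) - card {?Cu', ?Cv'} \<le> card (components E W) - 1" .
  moreover have "card {?Cu', ?Cv'} \<le> 2" by (simp add: card_insert_le_m1)
  moreover have "card (components E W) \<ge> 1" using Cu finE card_0_eq by fastforce
  ultimately show ?thesis by linarith
qed



lemma T_bound:
  assumes tv: "toughness V E = ereal (1/2)" and cs: "cutset V E S"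
  shows "num_comp V E S \<le> 2 * card S"
proof (rule ccontr)
  assume "\<not> num_comp V E S \<le> 2 * card S"
  then have "2 * card S < num_comp V E S" by simp
  then have lt: "2 * real (card S) < real (num_comp V E S)" by linarith
  define c where "c = real (num_comp V E S)"
  define n where "n = real (card S)"
  define t0 where "t0 = (n / c + 1/2) / 2"
  have n0: "0 \<le> n" unfolding n_def by simp
  have c0: "0 < c" using lt n0 unfolding c_def n_def by linarith
  have q1: "n / c < 1/2" using lt c0 unfolding c_def[symmetric] n_def[symmetric]
    by (simp add: divide_less_eq)
  have q2: "0 \<le> n / c" using n0 c0 by simp
  have t0a: "0 < t0" using q1 q2 by (simp add: t0_def)
  have t0b: "t0 < 1/2" using q1 q2 by (simp add: t0_def)
  note t0 = t0a t0b
  have ct0: "c * t0 = (n + c / 2) / 2" unfolding t0_def using c0 by (simp add: field_simps)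
  have nct0: "n < c * t0" unfolding ct0 using lt unfolding c_def[symmetric] n_def[symmetric] by (simp add: field_simps)
  have bnd: "t \<le> t0" if "0 < t" "tough V E t" for t
  proof (rule ccontr)
    assume "\<not> t \<le> t0"
    then have tt: "t0 < t" by simp
    have "c \<le> n / t" using that cs unfolding tough_def c_def n_def by blast
    then have "c * t \<le> n" using that(1) by (simp add: le_divide_eq)
    moreover have "c * t0 < c * t" using tt c0 by simp
    ultimately show False using nct0 by linarith
  qed
  have "toughness V E \<le> ereal t0" unfolding toughness_def
  proof (rule Sup_least)
    fix x assume "x \<in> {0} \<union> {ereal t |t. 0 < t \<and> tough V E t}"
    then show "x \<le> ereal t0" using bnd t0 by auto
  qed
  then show False using tv t0 by simp
qed

lemma M_exists:
  assumes "toughness V E' < ereal (1/2)"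
  shows "\<exists>S. cutset V E' S \<and> num_comp V E' S > 2 * card S"
proof (rule ccontr)
  assume "\<not> ?thesis"
  then have a: "num_comp V E' S \<le> 2 * card S" if "cutset V E' S" for S
    using that by (meson not_less)
  have "tough V E' (1/2)" unfolding tough_def
  proof (intro allI impI)
    fix S assume "cutset V E' S"
    then have "num_comp V E' S \<le> 2 * card S" by (rule a)
    then have "real (num_comp V E' S) \<le> 2 * real (card S)" by linarith
    then show "real (num_comp V E' S) \<le> real (card S) / (1/2)" by simp
  qed
  then have "ereal (1/2) \<in> {0} \<union> {ereal t |t. 0 < t \<and> tough V E' t}" by (intro UnI2 CollectI exI[of _ "1/2"]) simp
  then have "ereal (1/2) \<le> toughness V E'" unfolding toughness_def by (rule Sup_upper)
  then show False using assms by simp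
qed




lemma comp_nonadj:
  assumes "p \<in> C" "q \<in> D" "C \<in> components E W" "D \<in> components E W" "C \<noteq> D"
  shows "{p,q} \<notin> E"
proof
  assume "{p,q} \<in> E"
  moreover have "p \<in> W" "q \<in> W" using comp_sub[OF assms(3)] comp_sub[OF assms(4)] assms(1,2) by auto
  ultimately have "reach_in E W p q" using reach_edge by metis
  then have "q \<in> C" using comp_closed[OF assms(3,1)] by blast
  then show False using comp_eq[OF assms(3,4) _ assms(2)] assms(5) by blast
qed

lemma claw_use:
  assumes cf: "claw_free V E" and V: "c \<in> V" "a \<in> V" "b \<in> V" "d \<in> V" and di: "distinct [c,a,b,d]"
    and ed: "{c,a} \<in> E" "{c,b} \<in> E" "{c,d} \<in> E" and ne: "{a,d} \<notin> E" "{b,d} \<notin> E"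
  shows "{a,b} \<in> E"
proof (rule ccontr)
  assume "{a,b} \<notin> E"
  then have "c \<in> V \<and> a \<in> V \<and> b \<in> V \<and> d \<in> V \<and> distinct [c, a, b, d] \<and> {c, a} \<in> E \<and> {c, b} \<in> E \<and> {c, d} \<in> E \<and>
     {a, b} \<notin> E \<and> {a, d} \<notin> E \<and> {b, d} \<notin> E" using V di ed ne by simp
  then have "\<not> claw_free V E" unfolding claw_free_def
    by (simp only: not_not) (rule exI[of _ c], rule exI[of _ a], rule exI[of _ b], rule exI[of _ d])
  then show False using cf by simp
qed

lemma key:
  assumes sg: "simple_graph V E" and tv: "toughness V E = ereal (1/2)"
    and M: "\<And>e. e \<in> E \<Longrightarrow> toughness V (E - {e}) < ereal (1/2)"
    and cf: "claw_free V E"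
    and e: "{u,v} \<in> E" "u \<noteq> v" and rr: "reach_in (E - {{u,v}}) V u v"
  shows "\<exists>s. s \<in> V \<and> s \<noteq> u \<and> s \<noteq> v \<and> {s,u} \<in> E \<and> {s,v} \<in> E \<and>
           \<not> reach_in (E - {{u,v}}) (V - {s}) u v"
proof -
  let ?E' = "E - {{u,v}}"
  have finV: "finite V" using sg unfolding simple_graph_def by blast
  obtain a0 b0 where ab: "{u,v} = {a0,b0}" "a0 \<in> V" "b0 \<in> V"
    using sg e(1) unfolding simple_graph_def by blast
  have uV: "u \<in> V" and vV: "v \<in> V" using ab by (auto simp: doubleton_eq_iff)
  obtain S where S: "cutset V ?E' S" "num_comp V ?E' S > 2 * card S"
    using M_exists[OF M[OF e(1)]] by blast
  define W where "W = V - S"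
  have SV: "S \<subseteq> V" using S(1) unfolding cutset_def by blast
  have finS: "finite S" using SV finV finite_subset by blast
  have finW: "finite W" unfolding W_def using finV by simp
  have WV: "W \<subseteq> V" unfolding W_def by blast
  have c'big: "card (components ?E' W) > 2 * card S" using S(2) unfolding num_comp_def W_def .
  have c'2: "card (components ?E' W) \<ge> 2" using S(1) unfolding cutset_def num_comp_def W_def by blast
  have split: "u \<in> W \<and> v \<in> W \<and> \<not> reach_in ?E' W u v"
  proof (rule ccontr)
    assume ns: "\<not> (u \<in> W \<and> v \<in> W \<and> \<not> reach_in ?E' W u v)"
    have byp: "reach_in ?E' W x y" if "x \<in> W" "y \<in> W" "{x,y} = {u,v}" for x y
    proof -
      have "(x = u \<and> y = v) \<or> (x = v \<and> y = u)" using that(3) by (auto simp: doubleton_eq_iff)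
      then have uvW: "u \<in> W" "v \<in> W" using that(1,2) by auto
      then have "reach_in ?E' W u v" using ns by blast
      then show ?thesis using \<open>(x = u \<and> y = v) \<or> (x = v \<and> y = u)\<close> reach_sym by metis
    qed
    have "components E W = components ?E' W" by (rule bypass_comp) (rule byp)
    then have eqn: "num_comp V E S = num_comp V ?E' S" unfolding num_comp_def W_def by simp
    then have "cutset V E S" using S(1) unfolding cutset_def by simp
    then have "num_comp V E S \<le> 2 * card S" by (rule T_bound[OF tv])
    then show False using eqn S(2) by simp
  qed
  have cG: "card (components ?E' W) \<le> card (components E W) + 1"
    using split_count[OF finW] split by blast
  have Sne: "S \<noteq> {}"
  proof
    assume "S = {}"
    then have "W = V" unfolding W_def by simp
    then show False using split rr by simp
  qed
  have S1: "card S = 1"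
  proof (rule ccontr)
    assume "card S \<noteq> 1"
    moreover have "card S \<noteq> 0" using Sne finS by simp
    ultimately have S2: "card S \<ge> 2" by linarith
    obtain s where s: "s \<in> S" using Sne by blast
    let ?S0 = "S - {s}"
    have sV: "s \<in> V" using s SV by blast
    have sW: "s \<notin> W" unfolding W_def using s by blast
    have VS0: "V - ?S0 = insert s W" unfolding W_def using sV s by blast
    have cS0: "card ?S0 = card S - 1" using s by (simp add: card_Diff_singleton)
    have av: "card (components E W) + 1 \<le> card (components E (insert s W)) + card {C \<in> components E W. \<exists>y\<in>C. {s, y} \<in> E}"
      by (rule add_vertex_count[OF finW sW])
    have cc: "card {C \<in> components E W. \<exists>y\<in>C. {s, y} \<in> E} \<le> 2"
      by (rule claw_count[OF cf WV sV sW])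
    have big: "num_comp V E ?S0 \<ge> 2 * card ?S0 + 1"
      using av cc cG c'big cS0 S2 unfolding num_comp_def VS0 by linarith
    then have "cutset V E ?S0" unfolding cutset_def using SV S2 cS0 by auto
    then have "num_comp V E ?S0 \<le> 2 * card ?S0" by (rule T_bound[OF tv])
    then show False using big by linarith
  qed
  then obtain s where Ss: "S = {s}" by (rule card_1_singletonE)
  have sV: "s \<in> V" using Ss SV by blast
  have Wd: "W = V - {s}" unfolding W_def Ss ..
  have sW: "s \<notin> W" unfolding Wd by blast
  have VW: "insert s W = V" unfolding Wd using sV by blast
  have su: "s \<noteq> u" "s \<noteq> v" using split sW by auto
  have nr: "\<not> reach_in ?E' (V - {s}) u v" using split unfolding Wd by blast
  have c3: "card (components ?E' W) \<ge> 3" using c'big S1 by linarith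
  have conE: "card (components E V) \<le> 1"
  proof (rule ccontr)
    assume "\<not> card (components E V) \<le> 1"
    then have "cutset V E {}" unfolding cutset_def num_comp_def by simp
    then have "num_comp V E {} \<le> 2 * card ({}::'a set)" by (rule T_bound[OF tv])
    then show False using \<open>\<not> card (components E V) \<le> 1\<close> unfolding num_comp_def by simp
  qed
  have bypV: "reach_in ?E' V x y" if "x \<in> V" "y \<in> V" "{x,y} = {u,v}" for x y
  proof -
    have "(x = u \<and> y = v) \<or> (x = v \<and> y = u)" using that(3) by (auto simp: doubleton_eq_iff)
    then show ?thesis using rr reach_sym by metis
  qed
  have conE': "card (components ?E' V) \<le> 1"
  proof -
    have eqc: "components E V = components ?E' V" by (rule bypass_comp) (rule bypV)
    show ?thesis using conE unfolding eqc .
  qed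
  have finE'V: "finite (components ?E' V)" using comp_finite finV by blast
  have nbr: "\<exists>y\<in>C. {s,y} \<in> ?E'" if C: "C \<in> components ?E' W" for C
  proof (rule ccontr)
    assume "\<not> (\<exists>y\<in>C. {s,y} \<in> ?E')"
    then have "C \<in> components ?E' (insert s W)" by (rule comp_keep[OF C])
    then have C1: "C \<in> components ?E' V" using VW by simp
    have C2: "{y. reach_in ?E' V s y} \<in> components ?E' V" by (rule comp_of[OF sV])
    have "C = {y. reach_in ?E' V s y}" using conE' finE'V C1 C2 card_le_Suc0_iff_eq by (metis One_nat_def)
    then have "s \<in> C" by (simp add: reach_refl)
    then show False using comp_sub[OF C] sW by blast
  qed
  let ?Cu = "{y. reach_in ?E' W u y}"
  let ?Cv = "{y. reach_in ?E' W v y}"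
  have Cu: "?Cu \<in> components ?E' W" by (rule comp_of) (use split in blast)
  have Cv: "?Cv \<in> components ?E' W" by (rule comp_of) (use split in blast)
  have uCu: "u \<in> ?Cu" by (simp add: reach_refl)
  have vCv: "v \<in> ?Cv" by (simp add: reach_refl)
  have vCu: "v \<notin> ?Cu" using split by blast
  have CuCv: "?Cu \<noteq> ?Cv" using vCv vCu by blast
  have finE'W: "finite (components ?E' W)" using comp_finite finW by blast
  have "card (components ?E' W) - card {?Cu, ?Cv} \<le> card (components ?E' W - {?Cu, ?Cv})"
    by (rule diff_card_le_card_Diff) simp
  moreover have "card {?Cu, ?Cv} \<le> 2" by (simp add: card_insert_le_m1)
  ultimately have "card (components ?E' W - {?Cu, ?Cv}) \<noteq> 0" using c3 by linarith
  then obtain A where A: "A \<in> components ?E' W" "A \<noteq> ?Cu" "A \<noteq> ?Cv"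
    by (metis DiffD1 DiffD2 card.empty ex_in_conv insertCI)
  obtain a where a: "a \<in> A" "{s,a} \<in> ?E'" using nbr[OF A(1)] by blast
  obtain x where x: "x \<in> ?Cu" "{s,x} \<in> ?E'" using nbr[OF Cu] by blast
  obtain y where y: "y \<in> ?Cv" "{s,y} \<in> ?E'" using nbr[OF Cv] by blast
  have aW: "a \<in> W" using comp_sub[OF A(1)] a(1) by blast
  have xW: "x \<in> W" using comp_sub[OF Cu] x(1) by blast
  have yW: "y \<in> W" using comp_sub[OF Cv] y(1) by blast
  have notA: "u \<notin> A" "v \<notin> A"
    using comp_eq[OF A(1) Cu _ uCu] comp_eq[OF A(1) Cv _ vCv] A(2,3) by blast+
  have xa: "{x,a} \<notin> E"
  proof
    assume xa: "{x,a} \<in> E"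
    have "{x,a} \<notin> ?E'" by (rule comp_nonadj[OF x(1) a(1) Cu A(1)]) (use A(2) in blast)
    then have "{x,a} = {u,v}" using xa by blast
    then have "a = u \<or> a = v" by (auto simp: doubleton_eq_iff)
    then show False using notA a(1) by blast
  qed
  have ya: "{y,a} \<notin> E"
  proof
    assume ya: "{y,a} \<in> E"
    have "{y,a} \<notin> ?E'" by (rule comp_nonadj[OF y(1) a(1) Cv A(1)]) (use A(3) in blast)
    then have "{y,a} = {u,v}" using ya by blast
    then have "a = u \<or> a = v" by (auto simp: doubleton_eq_iff)
    then show False using notA a(1) by blast
  qed
  have xy: "x \<noteq> y" using comp_eq[OF Cu Cv x(1)] y(1) CuCv by blast
  have xa': "x \<noteq> a" using comp_eq[OF Cu A(1) x(1)] a(1) A(2) by blast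
  have ya': "y \<noteq> a" using comp_eq[OF Cv A(1) y(1)] a(1) A(3) by blast
  have dist: "distinct [s, x, y, a]" using xy xa' ya' sW xW yW aW by auto
  have "{x,y} \<in> E"
    by (rule claw_use[OF cf sV _ _ _ dist]) (use WV xW yW aW x(2) y(2) a(2) xa ya in auto)
  moreover have "{x,y} \<notin> ?E'" by (rule comp_nonadj[OF x(1) y(1) Cu Cv CuCv])
  ultimately have "{x,y} = {u,v}" by blast
  then have "(x = u \<and> y = v) \<or> (x = v \<and> y = u)" by (auto simp: doubleton_eq_iff)
  moreover have "x \<noteq> v" using x(1) vCu by blast
  ultimately have xu: "x = u" "y = v" by auto
  have "{s,u} \<in> E" "{s,v} \<in> E" using x(2) y(2) xu by auto
  then show ?thesis using sV su nr by blast
qed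




lemma path_reach:
  assumes "i \<le> m"
    and ed: "\<And>l. i \<le> l \<Longrightarrow> l < m \<Longrightarrow> {f l, f (Suc l)} \<in> E \<and> {f l, f (Suc l)} \<noteq> e"
    and vw: "\<And>l. i \<le> l \<Longrightarrow> l \<le> m \<Longrightarrow> f l \<in> W"
  shows "reach_in (E - {e}) W (f i) (f m)"
  using assms
proof (induction m rule: dec_induct)
  case base then show ?case by (simp add: reach_refl)
next
  case (step m)
  have "reach_in (E - {e}) W (f i) (f m)" by (rule step.IH) (use step.prems step.hyps in auto)
  moreover have "reach_in (E - {e}) W (f m) (f (Suc m))"
  proof (rule reach_edge)
    show "f m \<in> W" "f (Suc m) \<in> W" using step.prems(2) step.hyps by auto
    show "{f m, f (Suc m)} \<in> E - {e}" using step.prems(1)[of m] step.hyps by auto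
  qed
  ultimately show ?case by (rule reach_trans)
qed

theorem mainTheorem11:
  fixes V :: "'a set" and E :: "'a set set"
  assumes "simple_graph V E"
    and "minimally_tough V E (1/2)"
    and "claw_free V E"
  shows "\<forall>vs. is_cycle V E vs \<longrightarrow> length vs = 3"
proof (intro allI impI)
  fix vs assume cyc: "is_cycle V E vs"
  note sg = assms(1) and cf = assms(3)
  have tv: "toughness V E = ereal (1/2)" using assms(2) unfolding minimally_tough_def by blast
  have M: "toughness V (E - {e}) < ereal (1/2)" if "e \<in> E" for e
    using assms(2) that unfolding minimally_tough_def by blast
  define k where "k = length vs"
  have k3: "k \<ge> 3" and dv: "distinct vs" and sv: "set vs \<subseteq> V"
    and ce: "\<And>i. i < k \<Longrightarrow> {vs ! i, vs ! ((i + 1) mod k)} \<in> E"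
    using cyc unfolding is_cycle_def k_def by auto
  show "length vs = 3"
  proof (rule ccontr)
    assume "length vs \<noteq> 3"
    then have k4: "k \<ge> 4" using k3 unfolding k_def by simp
    define f where "f l = vs ! (l mod k)" for l
    have k0: "0 < k" using k4 by simp
    have fV: "f l \<in> V" for l
    proof -
      have "l mod k < length vs" using k0 by (simp add: k_def)
      then show ?thesis unfolding f_def using sv nth_mem by blast
    qed
    have fE: "{f l, f (Suc l)} \<in> E" for l
    proof -
      have "{vs ! (l mod k), vs ! ((l mod k + 1) mod k)} \<in> E" using ce k0 by simp
      moreover have "(l mod k + 1) mod k = Suc l mod k" by (simp add: mod_Suc_eq)
      ultimately show ?thesis unfolding f_def by simp
    qed
    have feq: "f a = f b \<longleftrightarrow> a mod k = b mod k" for a b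
      unfolding f_def using dv k0 by (simp add: nth_eq_iff_index_eq k_def)
    have dbl: "(a mod k = c mod k \<and> b mod k = d mod k) \<or> (a mod k = d mod k \<and> b mod k = c mod k)"
      if "{f a, f b} = {f c, f d}" for a b c d
      using that feq by (metis doubleton_eq_iff)
    have ml: "l mod k = l" if "l < k" for l using that by simp
    have mk: "k mod k = 0" by simp
    have mk1: "Suc k mod k = 1" using k4 by (simp add: mod_Suc)
    have f0: "f k = f 0" using feq by simp
    have f1: "f (Suc k) = f 1" using feq mk1 k4 by simp
    let ?e1 = "{f 0, f 1}"
    have path1: "reach_in (E - {?e1}) W (f 1) (f k)"
      if W: "\<And>l. 1 \<le> l \<Longrightarrow> l \<le> k \<Longrightarrow> f l \<in> W" for W
    proof (rule path_reach)
      show "1 \<le> k" using k4 by simp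
      show "f l \<in> W" if "1 \<le> l" "l \<le> k" for l using W that .
      fix l assume l: "1 \<le> l" "l < k"
      show "{f l, f (Suc l)} \<in> E \<and> {f l, f (Suc l)} \<noteq> ?e1"
      proof (intro conjI notI)
        show "{f l, f (Suc l)} \<in> E" by (rule fE)
        assume "{f l, f (Suc l)} = ?e1"
        then have "(l mod k = 0 mod k \<and> Suc l mod k = 1 mod k) \<or> (l mod k = 1 mod k \<and> Suc l mod k = 0 mod k)"
          by (rule dbl)
        then show False using l k4 ml[of l] ml[of "Suc l"] by (cases "Suc l = k") auto
      qed
    qed
    have f01: "f 0 \<noteq> f 1" using feq k4 by simp
    have rr1: "reach_in (E - {?e1}) V (f 0) (f 1)"
      using path1[of V] fV f0 reach_sym by metis
    obtain s where s: "s \<in> V" "s \<noteq> f 0" "s \<noteq> f 1" "{s, f 0} \<in> E" "{s, f 1} \<in> E"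
      "\<not> reach_in (E - {?e1}) (V - {s}) (f 0) (f 1)"
      using key[OF sg tv M cf fE[of 0] _ ] f01 rr1 by auto
    obtain j where j: "2 \<le> j" "j < k" "s = f j"
    proof (rule ccontr)
      assume nj: "\<not> thesis"
      note thatj = that
      have "f l \<in> V - {s}" if "1 \<le> l" "l \<le> k" for l
      proof -
        have "f l \<noteq> s"
        proof
          assume fl: "f l = s"
          have lm: "l mod k < k" using k0 by simp
          have "f (l mod k) = f l" using feq by simp
          have "l mod k \<noteq> 0" using s(2) fl feq[of l 0] by simp
          moreover have "l mod k \<noteq> 1" using s(3) fl feq[of l 1] k4 by simp
          ultimately have "l mod k \<noteq> 0" "l mod k \<noteq> 1" by auto
          then have "2 \<le> l mod k" by linarith
          then have "thesis" using thatj[of "l mod k"] lm \<open>f (l mod k) = f l\<close> fl by simp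
          then show False using nj by simp
        qed
        then show ?thesis using fV by simp
      qed
      then have "reach_in (E - {?e1}) (V - {s}) (f 1) (f k)" by (rule path1)
      then show False using s(6) f0 reach_sym by metis
    qed
    show False
    proof (cases "j \<le> k - 2")
      case True
      let ?e2 = "{f 0, f j}"
      have e2E: "?e2 \<in> E" using s(4) j(3) by (simp add: insert_commute)
      have f0j: "f 0 \<noteq> f j" using feq j ml by simp
      have path2: "reach_in (E - {?e2}) W (f 0) (f j)"
        if W: "\<And>l. 0 \<le> l \<Longrightarrow> l \<le> j \<Longrightarrow> f l \<in> W" for W
      proof (rule path_reach)
        show "0 \<le> j" by simp
        show "f l \<in> W" if "0 \<le> l" "l \<le> j" for l using W that .
        fix l assume l: "0 \<le> l" "l < j"
        show "{f l, f (Suc l)} \<in> E \<and> {f l, f (Suc l)} \<noteq> ?e2"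
        proof (intro conjI notI)
          show "{f l, f (Suc l)} \<in> E" by (rule fE)
          assume "{f l, f (Suc l)} = ?e2"
          then have "(l mod k = 0 mod k \<and> Suc l mod k = j mod k) \<or> (l mod k = j mod k \<and> Suc l mod k = 0 mod k)"
            by (rule dbl)
          then show False using l j ml[of l] ml[of "Suc l"] ml[of j] by auto
        qed
      qed
      have path3: "reach_in (E - {?e2}) W (f j) (f k)"
        if W: "\<And>l. j \<le> l \<Longrightarrow> l \<le> k \<Longrightarrow> f l \<in> W" for W
      proof (rule path_reach)
        show "j \<le> k" using j by simp
        show "f l \<in> W" if "j \<le> l" "l \<le> k" for l using W that .
        fix l assume l: "j \<le> l" "l < k"
        show "{f l, f (Suc l)} \<in> E \<and> {f l, f (Suc l)} \<noteq> ?e2"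
        proof (intro conjI notI)
          show "{f l, f (Suc l)} \<in> E" by (rule fE)
          assume "{f l, f (Suc l)} = ?e2"
          then have "(l mod k = 0 mod k \<and> Suc l mod k = j mod k) \<or> (l mod k = j mod k \<and> Suc l mod k = 0 mod k)"
            by (rule dbl)
          then show False using l j True ml[of l] ml[of j] ml[of "Suc l"] by (cases "Suc l = k") auto
        qed
      qed
      have rr2: "reach_in (E - {?e2}) V (f 0) (f j)" using path2[of V] fV by blast
      obtain s2 where s2: "s2 \<noteq> f 0" "s2 \<noteq> f j" "\<not> reach_in (E - {?e2}) (V - {s2}) (f 0) (f j)"
        using key[OF sg tv M cf e2E f0j rr2] by blast
      show False
      proof (cases "\<exists>l0. 0 < l0 \<and> l0 < j \<and> s2 = f l0")
        case False
        have "f l \<in> V - {s2}" if "0 \<le> l" "l \<le> j" for l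
        proof -
          have "f l \<noteq> s2"
          proof
            assume fl: "f l = s2"
            have "l \<noteq> 0" using fl s2(1) by metis
            moreover have "l \<noteq> j" using fl s2(2) by metis
            ultimately have "0 < l \<and> l < j \<and> s2 = f l" using that fl by auto
            then show False using False by blast
          qed
          then show ?thesis using fV by simp
        qed
        then have "reach_in (E - {?e2}) (V - {s2}) (f 0) (f j)" by (rule path2)
        then show False using s2(3) by simp
      next
        case True
        then obtain l0 where l0: "0 < l0" "l0 < j" "s2 = f l0" by blast
        have "f l \<in> V - {s2}" if "j \<le> l" "l \<le> k" for l
        proof -
          have "f l \<noteq> f l0"
          proof
            assume "f l = f l0"
            then have "l mod k = l0 mod k" using feq by simp
            then show False using that l0 j ml[of l] ml[of l0] by (cases "l = k") auto
          qed
          then show ?thesis using fV l0(3) by simp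
        qed
        then have "reach_in (E - {?e2}) (V - {s2}) (f j) (f k)" by (rule path3)
        then show False using s2(3) f0 reach_sym by metis
      qed
    next
      case False
      then have jk: "j = k - 1" using j by simp
      have j3: "j \<ge> 3" using jk k4 by simp
      let ?e3 = "{f 1, f j}"
      have e3E: "?e3 \<in> E" using s(5) j(3) by (simp add: insert_commute)
      have f1j: "f 1 \<noteq> f j" using feq j j3 ml[of 1] ml[of j] k4 by simp
      have path4: "reach_in (E - {?e3}) W (f 1) (f j)"
        if W: "\<And>l. 1 \<le> l \<Longrightarrow> l \<le> j \<Longrightarrow> f l \<in> W" for W
      proof (rule path_reach)
        show "1 \<le> j" using j by simp
        show "f l \<in> W" if "1 \<le> l" "l \<le> j" for l using W that .
        fix l assume l: "1 \<le> l" "l < j"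
        show "{f l, f (Suc l)} \<in> E \<and> {f l, f (Suc l)} \<noteq> ?e3"
        proof (intro conjI notI)
          show "{f l, f (Suc l)} \<in> E" by (rule fE)
          assume "{f l, f (Suc l)} = ?e3"
          then have "(l mod k = 1 mod k \<and> Suc l mod k = j mod k) \<or> (l mod k = j mod k \<and> Suc l mod k = 1 mod k)"
            by (rule dbl)
          then show False using l j j3 k4 ml[of l] ml[of "Suc l"] ml[of j] ml[of 1] by auto
        qed
      qed
      have path5: "reach_in (E - {?e3}) W (f j) (f (Suc k))"
        if W: "\<And>l. j \<le> l \<Longrightarrow> l \<le> Suc k \<Longrightarrow> f l \<in> W" for W
      proof (rule path_reach)
        show "j \<le> Suc k" using j by simp
        show "f l \<in> W" if "j \<le> l" "l \<le> Suc k" for l using W that .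
        fix l assume l: "j \<le> l" "l < Suc k"
        show "{f l, f (Suc l)} \<in> E \<and> {f l, f (Suc l)} \<noteq> ?e3"
        proof (intro conjI notI)
          show "{f l, f (Suc l)} \<in> E" by (rule fE)
          assume "{f l, f (Suc l)} = ?e3"
          then have "(l mod k = 1 mod k \<and> Suc l mod k = j mod k) \<or> (l mod k = j mod k \<and> Suc l mod k = 1 mod k)"
            by (rule dbl)
          moreover have "l = k - 1 \<or> l = k" using l jk by auto
          ultimately show False using jk k4 ml[of 1] ml[of j] ml[of "k - 1"] mk mk1 by auto
        qed
      qed
      have rr3: "reach_in (E - {?e3}) V (f 1) (f j)" using path4[of V] fV by blast
      obtain s3 where s3: "s3 \<noteq> f 1" "s3 \<noteq> f j" "\<not> reach_in (E - {?e3}) (V - {s3}) (f 1) (f j)"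
        using key[OF sg tv M cf e3E f1j rr3] by blast
      show False
      proof (cases "\<exists>l0. 1 < l0 \<and> l0 < j \<and> s3 = f l0")
        case False
        have "f l \<in> V - {s3}" if "1 \<le> l" "l \<le> j" for l
        proof -
          have "f l \<noteq> s3"
          proof
            assume fl: "f l = s3"
            have "l \<noteq> 1" using fl s3(1) by metis
            moreover have "l \<noteq> j" using fl s3(2) by metis
            ultimately have "1 < l \<and> l < j \<and> s3 = f l" using that fl by auto
            then show False using False by blast
          qed
          then show ?thesis using fV by simp
        qed
        then have "reach_in (E - {?e3}) (V - {s3}) (f 1) (f j)" by (rule path4)
        then show False using s3(3) by simp
      next
        case True
        then obtain l0 where l0: "1 < l0" "l0 < j" "s3 = f l0" by blast
        have "f l \<in> V - {s3}" if "j \<le> l" "l \<le> Suc k" for l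
        proof -
          have "f l \<noteq> f l0"
          proof
            assume "f l = f l0"
            then have "l mod k = l0 mod k" using feq by simp
            moreover have "l = k - 1 \<or> l = k \<or> l = Suc k" using that jk by auto
            ultimately show False using l0 jk k4 ml[of l0] ml[of "k - 1"] mk mk1 by auto
          qed
          then show ?thesis using fV l0(3) by simp
        qed
        then have "reach_in (E - {?e3}) (V - {s3}) (f j) (f (Suc k))" by (rule path5)
        then show False using s3(3) f1 reach_sym by metis
      qed
    qed
  qed
qed

end
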